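(* Under the setup and assumptions in the context (in particular, joint exchangeability of $\{(X_i,Y_i,\mathcal{C}_i)\}_{i\in[n+m]}$), for any fixed $\alpha\in(0,1)$, any $0\le k\le n$, and any screening rule satisfying the measurability requirement, the selection set $\mathcal{S}_{\mathrm{ACS}}=P_T$ output by adaptive conformal selection (ACS) at level $\alpha$ satisfies $$\mathrm{FDR}(\mathcal{S}_{\mathrm{ACS}})=\mathbb{E}\Big[\frac{|P_T\cap\mathcal{H}_0|}{|P_T|\vee 1}\Big]\le \alpha.$$
   Context: Setup. Let $n,m\ge 1$ and $0\le k\le n$ be integers. For $i\in[n+m]=\{1,\dots,n+m\}$ let $X_i\in\mathcal{X}$ (feature), $Y_i\in\mathbb{R}$ (outcome) and $\mathcal{C}_i\subseteq\mathbb{R}$ (property set, always observed); write $Z_i=(X_i,Y_i)$. Assume $\{(X_i,Y_i,\mathcal{C}_i)\}_{i\in[n+m]}$ are jointly exchangeable. Membership indicators $A_i\in\{0,1\}$ are such that $(A_1,\dots,A_{n+m})$ is uniformly distributed over binary vectors with exactly $n$ zeros and $m$ ones, independent of the data (this models randomly permuting the indices of $n$ labeled and $m$ test samples): $A_i=0$ means $i$ is a labeled sample ($Y_i$ observed), $A_i=1$ means $i$ is a test sample ($Y_i$ unobserved). Put $\tilde Z_i=Z_i$ if $A_i=0$ and $\tilde Z_i=X_i$ if $A_i=1$. A test index $i$ is null if $Y_i\in\mathcal{C}_i$; $\mathcal{H}_0=\{i: A_i=1, Y_i\in\mathcal{C}_i\}$. ACS screening. A random ordering $\pi$ of $[n+m]$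 is built sequentially. $(\pi(1),\dots,\pi(k))$ is a uniformly random ordered choice of $k$ distinct indices from $\{i:A_i=0\}$, independent of all else. For $\ell\ge k$ define $O_\ell=(\pi(1),\dots,\pi(\ell))$ (screened indices), $U_\ell=[n+m]\setminus O_\ell$, $N^+_\ell=\{i\in U_\ell: A_i=0, Y_i\notin\mathcal{C}_i\}$, $N^-_\ell=\{i\in U_\ell: A_i=0, Y_i\in\mathcal{C}_i\}$, $P_\ell=\{i\in U_\ell: A_i=1\}$, and the $\sigma$-algebra $$\mathcal{F}_\ell=\sigma\Big(O_\ell,\ |N^-_\ell|,\ |P_\ell|,\ \{(\tilde Z_i,A_i)\}_{i\in O_\ell\cup N^+_k},\ \{X_i\}_{i\in U_\ell}\Big).$$ The only requirement on the rule is that for each $\ell\ge k$, $\pi(\ell+1)\in U_\ell$ is $\mathcal{F}_\ell$-measurable. Define $$\widehat{\mathrm{FDP}}(\ell)=\frac{m}{n-k+1}\cdot\frac{1+|N^-_\ell|}{|P_\ell|\vee 1},\qquad T=\inf\{\ell\in\{k,\dots,n+m\}:\widehat{\mathrm{FDP}}(\ell)\le\alpha\},$$ and the output is $\mathcal{S}_{\mathrm{ACS}}=P_T$ (with $P_T=\emptyset$ if $T=\infty$). Convention: $0/0=0$, $a\vee b=\max(a,b)$. *)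

theory Defs
  imports "HOL-Probability.Probability"
begin

(* Indices are 0-based: [n+m] is rendered as {..<n+m}.
   A data vector d maps i to (X_i, Y_i, C_i).
   A membership vector a maps i to True iff i is a test sample (A_i = 1). *)

type_synonym 'x acs_data = "nat \<Rightarrow> 'x \<times> real \<times> real set"

definition Xof :: "'x acs_data \<Rightarrow> nat \<Rightarrow> 'x" where "Xof d i = fst (d i)"
definition Yof :: "'x acs_data \<Rightarrow> nat \<Rightarrow> real" where "Yof d i = fst (snd (d i))"
definition Cof :: "'x acs_data \<Rightarrow> nat \<Rightarrow> real set" where "Cof d i = snd (snd (d i))"

definition Nplus :: "nat \<Rightarrow> 'x acs_data \<Rightarrow> (nat \<Rightarrow> bool) \<Rightarrow> nat set \<Rightarrow> nat set" where
  "Nplus N d a Os = {i \<in> {..<N} - Os. \<not> a i \<and> Yof d i \<notin> Cof d i}"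
definition Nminus :: "nat \<Rightarrow> 'x acs_data \<Rightarrow> (nat \<Rightarrow> bool) \<Rightarrow> nat set \<Rightarrow> nat set" where
  "Nminus N d a Os = {i \<in> {..<N} - Os. \<not> a i \<and> Yof d i \<in> Cof d i}"
definition Pset :: "nat \<Rightarrow> (nat \<Rightarrow> bool) \<Rightarrow> nat set \<Rightarrow> nat set" where
  "Pset N a Os = {i \<in> {..<N} - Os. a i}"

(* The information generating F_l:
   (O_l, |N^-_l|, |P_l|, R = O_l \<union> N^+_k, (A_i)_{i\<in>R}, (Y_i)_{i\<in>R, A_i=0}, (X_i)_{i\<in>[N]}),
   where the masked families use default values outside the revealed indices. *)
type_synonym 'x acs_info =
  "nat list \<times> nat \<times> nat \<times> nat set \<times> (nat \<Rightarrow> bool) \<times> (nat \<Rightarrow> real) \<times> (nat \<Rightarrow> 'x)"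

definition acs_infoM :: "'x measure \<Rightarrow> nat \<Rightarrow> 'x acs_info measure" where
  "acs_infoM MX N =
     (count_space UNIV) \<Otimes>\<^sub>M (count_space UNIV) \<Otimes>\<^sub>M (count_space UNIV) \<Otimes>\<^sub>M (count_space UNIV)
     \<Otimes>\<^sub>M (\<Pi>\<^sub>M i\<in>{..<N}. count_space UNIV) \<Otimes>\<^sub>M (\<Pi>\<^sub>M i\<in>{..<N}. borel)
     \<Otimes>\<^sub>M (\<Pi>\<^sub>M i\<in>{..<N}. MX)"

definition acs_info :: "nat \<Rightarrow> 'x acs_data \<Rightarrow> (nat \<Rightarrow> bool) \<Rightarrow> nat list \<Rightarrow> nat list \<Rightarrow> 'x acs_info" where
  "acs_info N d a init Os =
     (let R = set Os \<union> Nplus N d a (set init) in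
      (Os, card (Nminus N d a (set Os)), card (Pset N a (set Os)), R,
       restrict (\<lambda>i. i \<in> R \<and> a i) {..<N},
       restrict (\<lambda>i. if i \<in> R \<and> \<not> a i then Yof d i else 0) {..<N},
       restrict (\<lambda>i. Xof d i) {..<N}))"

(* screened list after j adaptive steps: O_{k+j}; pi(l+1) = rule l (info at l) *)
primrec acs_order :: "nat \<Rightarrow> 'x acs_data \<Rightarrow> (nat \<Rightarrow> bool) \<Rightarrow> nat list
    \<Rightarrow> (nat \<Rightarrow> 'x acs_info \<Rightarrow> nat) \<Rightarrow> nat \<Rightarrow> nat list" where
  "acs_order N d a init rule 0 = init"
| "acs_order N d a init rule (Suc j) =
     (let Os = acs_order N d a init rule j in Os @ [rule (length Os) (acs_info N d a init Os)])"

definition fdp_hat :: "nat \<Rightarrow> nat \<Rightarrow> nat \<Rightarrow> 'x acs_data \<Rightarrow> (nat \<Rightarrow> bool) \<Rightarrow> nat set \<Rightarrow> real" where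
  "fdp_hat n m k d a Os =
     real m / (real n - real k + 1) * (1 + real (card (Nminus (n+m) d a Os)))
       / real (max (card (Pset (n+m) a Os)) 1)"

definition acs_select :: "nat \<Rightarrow> nat \<Rightarrow> real \<Rightarrow> 'x acs_data \<Rightarrow> (nat \<Rightarrow> bool) \<Rightarrow> nat list
    \<Rightarrow> (nat \<Rightarrow> 'x acs_info \<Rightarrow> nat) \<Rightarrow> nat set" where
  "acs_select n m \<alpha> d a init rule =
     (let k = length init;
          Ord = (\<lambda>l. set (acs_order (n+m) d a init rule (l - k)));
          L = {l \<in> {k..n+m}. fdp_hat n m k d a (Ord l) \<le> \<alpha>}
      in if L = {} then {} else Pset (n+m) a (Ord (Min L)))"

definition acs_fdp :: "nat \<Rightarrow> nat \<Rightarrow> real \<Rightarrow> 'x acs_data \<Rightarrow> (nat \<Rightarrow> bool) \<Rightarrow> nat list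
    \<Rightarrow> (nat \<Rightarrow> 'x acs_info \<Rightarrow> nat) \<Rightarrow> real" where
  "acs_fdp n m \<alpha> d a init rule =
     (let S = acs_select n m \<alpha> d a init rule;
          H0 = {i. i < n+m \<and> a i \<and> Yof d i \<in> Cof d i}
      in real (card (S \<inter> H0)) / real (max (card S) 1))"

(* joint law of (A, (pi(1),...,pi(k))): A uniform over membership vectors with exactly m tests,
   then a uniformly random ordered choice of k distinct labeled indices *)
definition label_pmf :: "nat \<Rightarrow> nat \<Rightarrow> nat \<Rightarrow> ((nat \<Rightarrow> bool) \<times> nat list) pmf" where
  "label_pmf n m k =
     do { a \<leftarrow> pmf_of_set {a. (\<forall>i. a i \<longrightarrow> i < n+m) \<and> card {i. a i} = m};
          init \<leftarrow> pmf_of_set {l. distinct l \<and> length l = k \<and> set l \<subseteq> {i. i < n+m \<and> \<not> a i}};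
          return_pmf (a, init) }"

end

theory Submission imports Defs begin

definition swp :: "nat \<Rightarrow> nat \<Rightarrow> (nat \<Rightarrow> bool) \<Rightarrow> nat \<Rightarrow> bool" where
  "swp i j a = (\<lambda>x. if x = i then a j else if x = j then a i else a x)"

definition tr :: "nat \<Rightarrow> nat \<Rightarrow> nat \<Rightarrow> nat" where
  "tr i j x = (if x = i then j else if x = j then i else x)"

lemma swp_tr: "swp i j a x = a (tr i j x)"
  by (simp add: swp_def tr_def)

lemma tr_tr[simp]: "tr i j (tr i j x) = x"
  by (simp add: tr_def)

lemma swp_swp[simp]: "swp i j (swp i j a) = a"
  by (auto simp: swp_def)

lemma card_swp:
  assumes "i \<in> D" "j \<in> D"
  shows "card {x\<in>D. P (swp i j a x)} = card {x\<in>D. P (a x)}"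
proof -
  have "bij_betw (tr i j) {x\<in>D. P (swp i j a x)} {x\<in>D. P (a x)}"
    by (rule bij_betw_byWitness[where f'="tr i j"])
       (use assms in \<open>auto simp: swp_tr tr_def\<close>)
  then show ?thesis by (rule bij_betw_same_card)
qed

lemma arith_real:
  fixes x y :: real
  assumes y: "y > 0" and xy: "x + y > 0"
  shows "x / y - x / (1 + y) + (- 1 / (1 + y) - (x / y - x / (1 + y))) * (x / (x + y)) = 0"
proof -
  have yy: "y * (1 + y) > 0" using y by simp
  have d: "1 + y \<noteq> 0" "y \<noteq> 0" "y * (1 + y) \<noteq> 0" "x + y \<noteq> 0"
    using y xy yy by simp_all
  have e1: "x / y - x / (1 + y) = x / (y * (1 + y))" using d by (simp add: field_simps)
  have e2: "- 1 / (1 + y) - x / (y * (1 + y)) = - (x + y) / (y * (1 + y))"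
    using y by (smt (verit, ccfv_SIG) add_divide_distrib nonzero_divide_mult_cancel_left)
  have h: "(x + y) * (x / (x + y)) = x" using d(4) by simp
  have e3: "- (x + y) / (y * (1 + y)) * (x / (x + y)) = - x / (y * (1 + y))"
    by (simp only: times_divide_eq_left mult_minus_left h)
  show ?thesis unfolding e1 e2 e3 by simp
qed

lemma arith_step:
  fixes v l :: nat
  assumes "0 < v + l"
  shows "real v / real l - real v / (1 + real l)
     + (- 1 / (1 + real l) - (real v / real l - real v / (1 + real l))) * (real v / real (v + l)) \<le> 0"
proof (cases "l = 0")
  case True
  then have "v > 0" using assms by simp
  then show ?thesis using True by simp
next
  case False
  have r: "real (v + l) = real v + real l" by simp
  have "real l > 0" "real v + real l > 0" using False by auto
  from arith_real[OF this] show ?thesis unfolding r by simp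
qed

lemma fdp_arith:
  fixes V L q mm D a :: real
  assumes "V \<ge> 0" "L \<ge> 0" "q \<ge> 1" "mm > 0" "D > 0" "mm / D * (1 + L) / q \<le> a"
  shows "V / q \<le> a * D / mm * (V / (1 + L))"
proof -
  have q: "q > 0" using assms by simp
  have l: "1 + L > 0" using assms by simp
  have h: "mm * (1 + L) \<le> a * D * q" using assms(6) q assms(5) by (simp add: field_simps)
  have "V * (mm * (1 + L)) \<le> V * (a * D * q)" by (rule mult_left_mono[OF h assms(1)])
  moreover have "mm + L * mm > 0" using mult_pos_pos[OF assms(4) l] by (simp add: algebra_simps)
  ultimately show ?thesis using q l assms(4) by (simp add: field_simps)
qed

locale acs_core =
  fixes n m k :: nat and \<alpha> :: real and d :: "'x acs_data"
    and rule :: "nat \<Rightarrow> 'x acs_info \<Rightarrow> nat"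
  assumes n1: "1 \<le> n" and m1: "1 \<le> m" and kn: "k \<le> n" and apos: "0 < \<alpha>"
    and rule_valid: "\<And>l I. l < n+m \<Longrightarrow> distinct (fst I) \<Longrightarrow> length (fst I) = l
                        \<Longrightarrow> set (fst I) \<subseteq> {..<n+m} \<Longrightarrow> rule l I \<in> {..<n+m} - set (fst I)"
begin

abbreviation "N \<equiv> n + m"

definition Hs :: "nat set" where "Hs = {i. i < N \<and> Yof d i \<in> Cof d i}"

abbreviation ord where "ord a init s \<equiv> acs_order N d a init rule s"

definition nx where "nx a init s = rule (length (ord a init s)) (acs_info N d a init (ord a init s))"

lemma ord_Suc: "ord a init (Suc s) = ord a init s @ [nx a init s]"
  by (simp add: nx_def Let_def)

declare acs_order.simps(2)[simp del]

lemma fst_info[simp]: "fst (acs_info N d a init Os) = Os"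
  by (simp add: acs_info_def Let_def)

lemma ord_0: "ord a init 0 = init" by simp

lemma ord_mono: "s \<le> s' \<Longrightarrow> set (ord a init s) \<subseteq> set (ord a init s')"
proof (induction s' )
  case 0 then show ?case by simp
next
  case (Suc s') then show ?case
    by (cases "s = Suc s'") (auto simp: ord_Suc)
qed

lemma init_sub_ord: "set init \<subseteq> set (ord a init s)"
  using ord_mono[of 0 s] by simp

lemma length_ord: "length (ord a init s) = length init + s"
  by (induction s) (auto simp: ord_Suc)

lemma ord_valid:
  assumes "distinct init" "length init = k" "set init \<subseteq> {..<N}" "k + s \<le> N"
  shows "distinct (ord a init s) \<and> set (ord a init s) \<subseteq> {..<N}"
  using assms(4)
proof (induction s)
  case 0 then show ?case using assms by simp
next
  case (Suc s)
  then have IH: "distinct (ord a init s)" "set (ord a init s) \<subseteq> {..<N}" by auto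
  have "nx a init s \<in> {..<N} - set (ord a init s)"
    unfolding nx_def
    using rule_valid[of "length (ord a init s)" "acs_info N d a init (ord a init s)"]
      IH Suc.prems assms by (auto simp: length_ord)
  then show ?case using IH by (auto simp: ord_Suc)
qed

lemma nx_valid:
  assumes "distinct init" "length init = k" "set init \<subseteq> {..<N}" "k + s < N"
  shows "nx a init s \<in> {..<N} - set (ord a init s)"
proof -
  have IH: "distinct (ord a init s)" "set (ord a init s) \<subseteq> {..<N}"
    using ord_valid[OF assms(1-3), of s] assms(4) by auto
  show ?thesis
    unfolding nx_def
    using rule_valid[of "length (ord a init s)" "acs_info N d a init (ord a init s)"]
      IH assms by (auto simp: length_ord)
qed

lemma Nminus_swp:
  assumes "i \<in> Hs" "j \<in> Hs" "i \<notin> Ob" "j \<notin> Ob"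
  shows "card (Nminus N d (swp i j a) Ob) = card (Nminus N d a Ob)"
proof -
  let ?D = "{x \<in> {..<N} - Ob. Yof d x \<in> Cof d x}"
  have "Nminus N d (swp i j a) Ob = {x\<in>?D. \<not> swp i j a x}"
       "Nminus N d a Ob = {x\<in>?D. \<not> a x}"
    by (auto simp: Nminus_def)
  then show ?thesis using card_swp[of i ?D j "\<lambda>b. \<not> b" a] assms by (auto simp: Hs_def)
qed

lemma Pset_swp:
  assumes "i \<in> Hs" "j \<in> Hs" "i \<notin> Ob" "j \<notin> Ob"
  shows "card (Pset N (swp i j a) Ob) = card (Pset N a Ob)"
proof -
  let ?D = "{..<N} - Ob"
  have "Pset N (swp i j a) Ob = {x\<in>?D. swp i j a x}"
       "Pset N a Ob = {x\<in>?D. a x}"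
    by (auto simp: Pset_def)
  then show ?thesis using card_swp[of i ?D j "\<lambda>b. b" a] assms by (auto simp: Hs_def)
qed

lemma PsetH_swp:
  assumes "i \<in> Hs" "j \<in> Hs" "i \<notin> Ob" "j \<notin> Ob"
  shows "card (Pset N (swp i j a) Ob \<inter> Hs) = card (Pset N a Ob \<inter> Hs)"
proof -
  let ?D = "({..<N} - Ob) \<inter> Hs"
  have "Pset N (swp i j a) Ob \<inter> Hs = {x\<in>?D. swp i j a x}"
       "Pset N a Ob \<inter> Hs = {x\<in>?D. a x}"
    by (auto simp: Pset_def)
  then show ?thesis using card_swp[of i ?D j "\<lambda>b. b" a] assms by (auto simp: Hs_def)
qed

lemma Nplus_swp:
  assumes "i \<in> Hs" "j \<in> Hs"
  shows "Nplus N d (swp i j a) Ob = Nplus N d a Ob"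
  using assms by (auto simp: Nplus_def Hs_def swp_def)

lemma info_swp:
  assumes "i \<in> Hs" "j \<in> Hs" "i \<notin> set Os" "j \<notin> set Os"
  shows "acs_info N d (swp i j a) init Os = acs_info N d a init Os"
proof -
  have np: "Nplus N d (swp i j a) (set init) = Nplus N d a (set init)"
    using Nplus_swp assms by blast
  have ni: "i \<notin> Nplus N d a (set init)" "j \<notin> Nplus N d a (set init)"
    using assms by (auto simp: Nplus_def Hs_def)
  let ?R = "set Os \<union> Nplus N d a (set init)"
  have eq: "x \<in> ?R \<Longrightarrow> swp i j a x = a x" for x
    using assms ni by (auto simp: swp_def)
  have r1: "restrict (\<lambda>x. x \<in> ?R \<and> swp i j a x) {..<N} = restrict (\<lambda>x. x \<in> ?R \<and> a x) {..<N}"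
    using eq by (intro restrict_ext) blast
  have r2: "restrict (\<lambda>x. if x \<in> ?R \<and> \<not> swp i j a x then Yof d x else 0) {..<N}
          = restrict (\<lambda>x. if x \<in> ?R \<and> \<not> a x then Yof d x else 0) {..<N}"
    using eq by (intro restrict_ext) auto
  show ?thesis
    using Nminus_swp[OF assms] Pset_swp[OF assms] np r1 r2
    by (simp only: acs_info_def Let_def)
qed

lemma ord_swp:
  assumes "i \<in> Hs" "j \<in> Hs" "i \<notin> set (ord a init s)" "j \<notin> set (ord a init s)"
  shows "ord (swp i j a) init s = ord a init s"
  using assms(3,4)
proof (induction s)
  case 0 then show ?case by simp
next
  case (Suc s)
  have sub: "set (ord a init s) \<subseteq> set (ord a init (Suc s))" by (rule ord_mono) simp
  then have IH: "ord (swp i j a) init s = ord a init s" using Suc by blast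
  have "acs_info N d (swp i j a) init (ord a init s) = acs_info N d a init (ord a init s)"
    by (rule info_swp) (use assms Suc.prems sub in auto)
  then have "nx (swp i j a) init s = nx a init s"
    unfolding nx_def IH by simp
  then show ?case by (simp add: ord_Suc IH)
qed

definition Omega :: "((nat \<Rightarrow> bool) \<times> nat list) set" where
  "Omega = Sigma {a. (\<forall>i. a i \<longrightarrow> i < N) \<and> card {i. a i} = m}
     (\<lambda>a. {l. distinct l \<and> length l = k \<and> set l \<subseteq> {i. i < N \<and> \<not> a i}})"

lemma Omega_iff: "\<omega> \<in> Omega \<longleftrightarrow> (\<forall>i. fst \<omega> i \<longrightarrow> i < N) \<and> card {i. fst \<omega> i} = m
   \<and> distinct (snd \<omega>) \<and> length (snd \<omega>) = k \<and> set (snd \<omega>) \<subseteq> {i. i < N \<and> \<not> fst \<omega> i}"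
  by (cases \<omega>) (auto simp: Omega_def)

lemma finite_Omega: "finite Omega"
proof -
  have A: "{a. (\<forall>i. a i \<longrightarrow> i < N) \<and> card {i. a i} = m} \<subseteq> (\<lambda>S x. x \<in> S) ` Pow {..<N}"
  proof
    fix a assume "a \<in> {a. (\<forall>i. a i \<longrightarrow> i < N) \<and> card {i. a i} = m}"
    then have "a = (\<lambda>x. x \<in> {i. a i})" "{i. a i} \<in> Pow {..<N}" by auto
    then show "a \<in> (\<lambda>S x. x \<in> S) ` Pow {..<N}" by blast
  qed
  have "finite {l::nat list. set l \<subseteq> {..<N} \<and> length l = k}"
    by (rule finite_lists_length_eq) simp
  then have B: "\<And>a. finite {l. distinct l \<and> length l = k \<and> set l \<subseteq> {i. i < N \<and> \<not> a i}}"
    by (rule rev_finite_subset) auto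
  show ?thesis unfolding Omega_def
    by (rule finite_SigmaI[OF finite_subset[OF A] B]) simp
qed

definition sw :: "nat \<Rightarrow> nat \<Rightarrow> ((nat \<Rightarrow> bool) \<times> nat list) \<Rightarrow> ((nat \<Rightarrow> bool) \<times> nat list)" where
  "sw i j \<omega> = (if i \<notin> set (snd \<omega>) \<and> j \<notin> set (snd \<omega>) then (swp i j (fst \<omega>), snd \<omega>) else \<omega>)"

lemma sw_sw[simp]: "sw i j (sw i j \<omega>) = \<omega>"
  by (auto simp: sw_def)

lemma sw_Omega:
  assumes "i < N" "j < N" "\<omega> \<in> Omega"
  shows "sw i j \<omega> \<in> Omega"
proof (cases "i \<notin> set (snd \<omega>) \<and> j \<notin> set (snd \<omega>)")
  case True
  have c: "card {x\<in>UNIV. swp i j (fst \<omega>) x} = card {x\<in>UNIV. fst \<omega> x}"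
    by (rule card_swp) auto
  have "set (snd \<omega>) \<subseteq> {x. x < N \<and> \<not> swp i j (fst \<omega>) x}"
    using True assms(3) by (auto simp: Omega_iff swp_def)
  then show ?thesis using True assms c by (auto simp: sw_def Omega_iff swp_def)
next
  case False
  then have "sw i j \<omega> = \<omega>" by (auto simp: sw_def)
  then show ?thesis using assms by simp
qed

lemma sum_sw:
  assumes "i < N" "j < N"
  shows "(\<Sum>\<omega>\<in>Omega. h (sw i j \<omega>)) = (\<Sum>\<omega>\<in>Omega. h \<omega>)"
  by (rule sum.reindex_bij_witness[of Omega "sw i j" "sw i j"]) (auto simp: sw_Omega assms)

definition OS where "OS \<omega> s = set (ord (fst \<omega>) (snd \<omega>) s)"
definition Vc where "Vc \<omega> s = card (Pset N (fst \<omega>) (OS \<omega> s) \<inter> Hs)"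
definition Lc where "Lc \<omega> s = card (Nminus N d (fst \<omega>) (OS \<omega> s))"
definition Pc where "Pc \<omega> s = card (Pset N (fst \<omega>) (OS \<omega> s))"
definition M where "M \<omega> s = real (Vc \<omega> s) / (1 + real (Lc \<omega> s))"
definition G where "G \<omega> s = Hs - OS \<omega> s"
definition stp where "stp \<omega> s \<longleftrightarrow> fdp_hat n m k d (fst \<omega>) (OS \<omega> s) \<le> \<alpha>"
definition nxo where "nxo \<omega> s = nx (fst \<omega>) (snd \<omega>) s"

lemma inv:
  assumes "\<omega> \<in> Omega" "i \<in> G \<omega> J" "j \<in> G \<omega> J"
  shows "sw i j \<omega> = (swp i j (fst \<omega>), snd \<omega>)"
    and "s \<le> J \<Longrightarrow> OS (sw i j \<omega>) s = OS \<omega> s"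
    and "s \<le> J \<Longrightarrow> Vc (sw i j \<omega>) s = Vc \<omega> s"
    and "s \<le> J \<Longrightarrow> Lc (sw i j \<omega>) s = Lc \<omega> s"
    and "s \<le> J \<Longrightarrow> Pc (sw i j \<omega>) s = Pc \<omega> s"
    and "s \<le> J \<Longrightarrow> stp (sw i j \<omega>) s = stp \<omega> s"
    and "G (sw i j \<omega>) J = G \<omega> J"
    and "nxo (sw i j \<omega>) J = nxo \<omega> J"
proof -
  have ij: "i \<in> Hs" "j \<in> Hs" "i \<notin> OS \<omega> J" "j \<notin> OS \<omega> J"
    using assms by (auto simp: G_def)
  have ninit: "i \<notin> set (snd \<omega>)" "j \<notin> set (snd \<omega>)"
    using ij init_sub_ord[of "snd \<omega>" "fst \<omega>" J] by (auto simp: OS_def)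
  show sw: "sw i j \<omega> = (swp i j (fst \<omega>), snd \<omega>)"
    using ninit by (simp add: sw_def)
  have ordeq: "ord (swp i j (fst \<omega>)) (snd \<omega>) s = ord (fst \<omega>) (snd \<omega>) s" if "s \<le> J" for s
  proof -
    have "OS \<omega> s \<subseteq> OS \<omega> J" using ord_mono[OF that] by (simp add: OS_def)
    then show ?thesis using ord_swp[OF ij(1,2), of "fst \<omega>" "snd \<omega>" s] ij(3,4) by (auto simp: OS_def)
  qed
  have nOS: "i \<notin> OS \<omega> s" "j \<notin> OS \<omega> s" if "s \<le> J" for s
    using ord_mono[OF that, of "fst \<omega>" "snd \<omega>"] ij by (auto simp: OS_def)
  show os: "OS (sw i j \<omega>) s = OS \<omega> s" if "s \<le> J" for s
    using ordeq[OF that] sw by (simp add: OS_def)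
  show "Vc (sw i j \<omega>) s = Vc \<omega> s" if "s \<le> J" for s
    using os[OF that] sw PsetH_swp[OF ij(1,2) nOS[OF that]] by (simp add: Vc_def)
  show lc: "Lc (sw i j \<omega>) s = Lc \<omega> s" if "s \<le> J" for s
    using os[OF that] sw Nminus_swp[OF ij(1,2) nOS[OF that]] by (simp add: Lc_def)
  show pc: "Pc (sw i j \<omega>) s = Pc \<omega> s" if "s \<le> J" for s
    using os[OF that] sw Pset_swp[OF ij(1,2) nOS[OF that]] by (simp add: Pc_def)
  show "stp (sw i j \<omega>) s = stp \<omega> s" if "s \<le> J" for s
    using lc[OF that] pc[OF that] os[OF that] by (simp add: stp_def fdp_hat_def Lc_def Pc_def)
  show "G (sw i j \<omega>) J = G \<omega> J" using os by (simp add: G_def)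
  have "acs_info N d (swp i j (fst \<omega>)) (snd \<omega>) (ord (fst \<omega>) (snd \<omega>) J)
      = acs_info N d (fst \<omega>) (snd \<omega>) (ord (fst \<omega>) (snd \<omega>) J)"
    by (rule info_swp) (use ij in \<open>auto simp: OS_def\<close>)
  then show "nxo (sw i j \<omega>) J = nxo \<omega> J"
    using ordeq[of J] sw by (simp add: nxo_def nx_def)
qed

lemma Hs_sub: "Hs \<subseteq> {..<N}" by (auto simp: Hs_def)

lemma G_sub: "G \<omega> s \<subseteq> {..<N}" using Hs_sub by (auto simp: G_def)

lemma finite_G: "finite (G \<omega> s)" using G_sub finite_subset by blast

lemma Omega_ord:
  assumes "\<omega> \<in> Omega"
  shows "distinct (snd \<omega>)" "length (snd \<omega>) = k" "set (snd \<omega>) \<subseteq> {..<N}"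
  using assms by (auto simp: Omega_iff)

lemma nxo_valid:
  assumes "\<omega> \<in> Omega" "k + J < N"
  shows "nxo \<omega> J \<in> {..<N} - OS \<omega> J"
  using nx_valid[OF Omega_ord[OF assms(1)] assms(2)] by (simp add: nxo_def OS_def)

lemma OS_Suc: "OS \<omega> (Suc J) = insert (nxo \<omega> J) (OS \<omega> J)"
  by (auto simp: OS_def nxo_def ord_Suc)

lemma dM:
  assumes "\<omega> \<in> Omega" "k + J < N"
  shows "M \<omega> (Suc J) - M \<omega> J = (if nxo \<omega> J \<in> G \<omega> J then
     (if fst \<omega> (nxo \<omega> J) then - 1 / (1 + real (Lc \<omega> J))
      else real (Vc \<omega> J) / real (Lc \<omega> J) - real (Vc \<omega> J) / (1 + real (Lc \<omega> J))) else 0)"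
proof -
  let ?x = "nxo \<omega> J" and ?O = "OS \<omega> J" and ?a = "fst \<omega>"
  have x: "?x < N" "?x \<notin> ?O" using nxo_valid[OF assms] by auto
  have P1: "Pset N ?a (OS \<omega> (Suc J)) \<inter> Hs = (Pset N ?a ?O \<inter> Hs) - {?x}"
    by (auto simp: OS_Suc Pset_def)
  have N1: "Nminus N d ?a (OS \<omega> (Suc J)) = Nminus N d ?a ?O - {?x}"
    by (auto simp: OS_Suc Nminus_def)
  have finP: "finite (Pset N ?a ?O \<inter> Hs)" by (auto simp: Pset_def)
  have finN: "finite (Nminus N d ?a ?O)" by (auto simp: Nminus_def)
  have V1: "Vc \<omega> (Suc J) = Vc \<omega> J - (if ?x \<in> Pset N ?a ?O \<inter> Hs then 1 else 0)"
    unfolding Vc_def P1 using finP by (simp add: card_Diff_singleton_if)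
  have L1: "Lc \<omega> (Suc J) = Lc \<omega> J - (if ?x \<in> Nminus N d ?a ?O then 1 else 0)"
    unfolding Lc_def N1 using finN by (simp add: card_Diff_singleton_if)
  show ?thesis
  proof (cases "?x \<in> G \<omega> J")
    case True
    then have xH: "?x \<in> Hs" by (simp add: G_def)
    show ?thesis
    proof (cases "?a ?x")
      case True
      have inP: "?x \<in> Pset N ?a ?O \<inter> Hs" using x xH True by (auto simp: Pset_def)
      have "Vc \<omega> J \<ge> 1" unfolding Vc_def using finP inP card_0_eq[OF finP] by fastforce
      moreover have "?x \<notin> Nminus N d ?a ?O" using True by (auto simp: Nminus_def)
      ultimately show ?thesis using inP V1 L1 \<open>?x \<in> G \<omega> J\<close> True
        by (simp add: M_def of_nat_diff diff_divide_distrib)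
    next
      case False
      have inN: "?x \<in> Nminus N d ?a ?O" using x xH False by (auto simp: Nminus_def Hs_def)
      have "Lc \<omega> J \<ge> 1" unfolding Lc_def using finN inN card_0_eq[OF finN] by fastforce
      moreover have "?x \<notin> Pset N ?a ?O \<inter> Hs" using False by (auto simp: Pset_def)
      ultimately have "Vc \<omega> (Suc J) = Vc \<omega> J" "real (Lc \<omega> (Suc J)) = real (Lc \<omega> J) - 1"
        using inN V1 L1 by (auto simp: of_nat_diff)
      then show ?thesis using \<open>?x \<in> G \<omega> J\<close> False by (simp add: M_def)
    qed
  next
    case False
    then have "?x \<notin> Hs" using x by (simp add: G_def)
    then have nP: "?x \<notin> Pset N ?a ?O \<inter> Hs" and nN: "?x \<notin> Nminus N d ?a ?O"
      using x by (auto simp: Nminus_def Hs_def)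
    have "Vc \<omega> (Suc J) = Vc \<omega> J" using V1 nP by (simp only: if_False diff_zero)
    moreover have "Lc \<omega> (Suc J) = Lc \<omega> J" using L1 nN by (simp only: if_False diff_zero)
    ultimately show ?thesis using False by (simp add: M_def)
  qed
qed

lemma sum_if_const: "finite A \<Longrightarrow> (\<Sum>i\<in>A. if i \<in> S then c else 0) = real (card (A \<inter> S)) * (c::real)"
  by (simp add: sum.inter_restrict[symmetric])

lemma sum3_swap:
  "(\<Sum>\<omega>\<in>Omega. \<Sum>i<N. \<Sum>j<N. f \<omega> i j) = (\<Sum>i<N. \<Sum>j<N. \<Sum>\<omega>\<in>Omega. f \<omega> i j)"
  by (rule trans[OF sum.swap]) (rule sum.cong[OF refl], rule sum.swap)

lemma swap_sum:
  assumes inv_Psi: "\<And>\<omega> i j. \<omega> \<in> Omega \<Longrightarrow> i \<in> G \<omega> J \<Longrightarrow> j \<in> G \<omega> J \<Longrightarrow> Psi (sw i j \<omega>) = Psi \<omega>"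
  shows "(\<Sum>\<omega>\<in>Omega. Psi \<omega> * (if nxo \<omega> J \<in> G \<omega> J \<and> fst \<omega> (nxo \<omega> J) then 1 else 0))
       = (\<Sum>\<omega>\<in>Omega. Psi \<omega> * (if nxo \<omega> J \<in> G \<omega> J then real (Vc \<omega> J) / real (card (G \<omega> J)) else 0))"
proof -
  define g where "g i j \<omega> = (if i \<in> G \<omega> J \<and> j \<in> G \<omega> J \<and> nxo \<omega> J = j
      then Psi \<omega> / real (card (G \<omega> J)) else 0)" for i j \<omega>
  have key: "(\<Sum>\<omega>\<in>Omega. g i j \<omega> * of_bool (fst \<omega> j)) = (\<Sum>\<omega>\<in>Omega. g i j \<omega> * of_bool (fst \<omega> i))"
    if ij: "i < N" "j < N" for i j
  proof -
    have "(\<Sum>\<omega>\<in>Omega. g i j \<omega> * of_bool (fst \<omega> j))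
        = (\<Sum>\<omega>\<in>Omega. g i j (sw i j \<omega>) * of_bool (fst (sw i j \<omega>) j))"
      by (rule sum_sw[OF ij, symmetric])
    also have "\<dots> = (\<Sum>\<omega>\<in>Omega. g i j \<omega> * of_bool (fst \<omega> i))"
    proof (rule sum.cong[OF refl])
      fix \<omega> assume om: "\<omega> \<in> Omega"
      show "g i j (sw i j \<omega>) * of_bool (fst (sw i j \<omega>) j) = g i j \<omega> * of_bool (fst \<omega> i)"
      proof (cases "i \<in> G \<omega> J \<and> j \<in> G \<omega> J")
        case True
        then have iG: "i \<in> G \<omega> J" and jG: "j \<in> G \<omega> J" by auto
        have e1: "sw i j \<omega> = (swp i j (fst \<omega>), snd \<omega>)" by (rule inv(1)[OF om iG jG])
        have e7: "G (sw i j \<omega>) J = G \<omega> J" by (rule inv(7)[OF om iG jG])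
        have e8: "nxo (sw i j \<omega>) J = nxo \<omega> J" by (rule inv(8)[OF om iG jG])
        have e9: "Psi (sw i j \<omega>) = Psi \<omega>" by (rule inv_Psi[OF om iG jG])
        have "fst (sw i j \<omega>) j = fst \<omega> i" using e1 by (simp add: swp_def)
        then show ?thesis using e7 e8 e9 by (simp add: g_def)
      next
        case False
        have "\<not> (i \<in> G (sw i j \<omega>) J \<and> j \<in> G (sw i j \<omega>) J)"
        proof
          assume a: "i \<in> G (sw i j \<omega>) J \<and> j \<in> G (sw i j \<omega>) J"
          have "G (sw i j (sw i j \<omega>)) J = G (sw i j \<omega>) J"
            using inv(7)[OF sw_Omega[OF ij om], of i J j] a by blast
          then show False using a False by simp
        qed
        then have z1: "g i j (sw i j \<omega>) = 0" unfolding g_def by auto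
        have z2: "g i j \<omega> = 0" using False unfolding g_def by auto
        show ?thesis using z1 z2 by simp
      qed
    qed
    finally show ?thesis .
  qed
  have Lp: "Psi \<omega> * (if nxo \<omega> J \<in> G \<omega> J \<and> fst \<omega> (nxo \<omega> J) then 1 else 0)
      = (\<Sum>i<N. \<Sum>j<N. g i j \<omega> * of_bool (fst \<omega> j))" for \<omega>
  proof -
    have inner: "(\<Sum>j<N. g i j \<omega> * of_bool (fst \<omega> j))
        = (if i \<in> G \<omega> J \<and> nxo \<omega> J \<in> G \<omega> J then Psi \<omega> / real (card (G \<omega> J)) * of_bool (fst \<omega> (nxo \<omega> J)) else 0)" for i
    proof -
      have "(\<Sum>j<N. g i j \<omega> * of_bool (fst \<omega> j)) = (\<Sum>j<N. if j = nxo \<omega> J then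
          (if i \<in> G \<omega> J \<and> nxo \<omega> J \<in> G \<omega> J then Psi \<omega> / real (card (G \<omega> J)) * of_bool (fst \<omega> (nxo \<omega> J)) else 0) else 0)"
        by (rule sum.cong) (auto simp: g_def)
      also have "\<dots> = (if i \<in> G \<omega> J \<and> nxo \<omega> J \<in> G \<omega> J then Psi \<omega> / real (card (G \<omega> J)) * of_bool (fst \<omega> (nxo \<omega> J)) else 0)"
        using G_sub[of \<omega> J] by (auto simp: sum.delta')
      finally show ?thesis .
    qed
    have "(\<Sum>i<N. \<Sum>j<N. g i j \<omega> * of_bool (fst \<omega> j))
       = (\<Sum>i<N. if i \<in> G \<omega> J then (if nxo \<omega> J \<in> G \<omega> J then Psi \<omega> / real (card (G \<omega> J)) * of_bool (fst \<omega> (nxo \<omega> J)) else 0) else 0)"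
      by (rule sum.cong[OF refl]) (simp add: inner)
    also have "\<dots> = real (card ({..<N} \<inter> G \<omega> J)) * (if nxo \<omega> J \<in> G \<omega> J then Psi \<omega> / real (card (G \<omega> J)) * of_bool (fst \<omega> (nxo \<omega> J)) else 0)"
      by (rule sum_if_const) simp
    also have "{..<N} \<inter> G \<omega> J = G \<omega> J" using G_sub by blast
    also have "real (card (G \<omega> J)) * (if nxo \<omega> J \<in> G \<omega> J then Psi \<omega> / real (card (G \<omega> J)) * of_bool (fst \<omega> (nxo \<omega> J)) else 0)
        = Psi \<omega> * (if nxo \<omega> J \<in> G \<omega> J \<and> fst \<omega> (nxo \<omega> J) then 1 else 0)"
    proof (cases "nxo \<omega> J \<in> G \<omega> J")
      case True
      then have "card (G \<omega> J) > 0" using finite_G card_gt_0_iff by blast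
      then show ?thesis using True by simp
    qed simp
    finally show ?thesis by simp
  qed
  have Rp: "(\<Sum>i<N. \<Sum>j<N. g i j \<omega> * of_bool (fst \<omega> i))
      = Psi \<omega> * (if nxo \<omega> J \<in> G \<omega> J then real (Vc \<omega> J) / real (card (G \<omega> J)) else 0)" for \<omega>
  proof -
    have inner: "(\<Sum>j<N. g i j \<omega> * of_bool (fst \<omega> i))
        = (if i \<in> G \<omega> J \<and> fst \<omega> i then (if nxo \<omega> J \<in> G \<omega> J then Psi \<omega> / real (card (G \<omega> J)) else 0) else 0)" for i
    proof -
      have "(\<Sum>j<N. g i j \<omega> * of_bool (fst \<omega> i)) = (\<Sum>j<N. if j = nxo \<omega> J then
          (if i \<in> G \<omega> J \<and> fst \<omega> i \<and> nxo \<omega> J \<in> G \<omega> J then Psi \<omega> / real (card (G \<omega> J)) else 0) else 0)"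
        by (rule sum.cong) (auto simp: g_def)
      also have "\<dots> = (if i \<in> G \<omega> J \<and> fst \<omega> i \<and> nxo \<omega> J \<in> G \<omega> J then Psi \<omega> / real (card (G \<omega> J)) else 0)"
        using G_sub[of \<omega> J] by (auto simp: sum.delta')
      finally show ?thesis by simp
    qed
    have "(\<Sum>i<N. \<Sum>j<N. g i j \<omega> * of_bool (fst \<omega> i))
       = (\<Sum>i<N. if i \<in> {i \<in> G \<omega> J. fst \<omega> i} then (if nxo \<omega> J \<in> G \<omega> J then Psi \<omega> / real (card (G \<omega> J)) else 0) else 0)"
      by (rule sum.cong[OF refl]) (simp add: inner)
    also have "\<dots> = real (card ({..<N} \<inter> {i \<in> G \<omega> J. fst \<omega> i})) * (if nxo \<omega> J \<in> G \<omega> J then Psi \<omega> / real (card (G \<omega> J)) else 0)"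
      by (rule sum_if_const) simp
    also have "{..<N} \<inter> {i \<in> G \<omega> J. fst \<omega> i} = Pset N (fst \<omega>) (OS \<omega> J) \<inter> Hs"
      using Hs_sub by (auto simp: G_def Pset_def)
    finally show ?thesis by (simp add: Vc_def)
  qed
  have "(\<Sum>\<omega>\<in>Omega. Psi \<omega> * (if nxo \<omega> J \<in> G \<omega> J \<and> fst \<omega> (nxo \<omega> J) then 1 else 0))
      = (\<Sum>\<omega>\<in>Omega. \<Sum>i<N. \<Sum>j<N. g i j \<omega> * of_bool (fst \<omega> j))"
    by (rule sum.cong[OF refl]) (rule Lp)
  also have "\<dots> = (\<Sum>i<N. \<Sum>j<N. \<Sum>\<omega>\<in>Omega. g i j \<omega> * of_bool (fst \<omega> j))"
    by (rule sum3_swap)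
  also have "\<dots> = (\<Sum>i<N. \<Sum>j<N. \<Sum>\<omega>\<in>Omega. g i j \<omega> * of_bool (fst \<omega> i))"
    by (intro sum.cong refl key) auto
  also have "\<dots> = (\<Sum>\<omega>\<in>Omega. \<Sum>i<N. \<Sum>j<N. g i j \<omega> * of_bool (fst \<omega> i))"
    by (rule sum3_swap[symmetric])
  also have "\<dots> = (\<Sum>\<omega>\<in>Omega. Psi \<omega> * (if nxo \<omega> J \<in> G \<omega> J then real (Vc \<omega> J) / real (card (G \<omega> J)) else 0))"
    by (rule sum.cong[OF refl]) (rule Rp)
  finally show ?thesis .
qed

lemma card_G: "card (G \<omega> J) = Vc \<omega> J + Lc \<omega> J"
proof -
  have "G \<omega> J = (Pset N (fst \<omega>) (OS \<omega> J) \<inter> Hs) \<union> Nminus N d (fst \<omega>) (OS \<omega> J)"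
    by (auto simp: G_def Pset_def Nminus_def Hs_def)
  moreover have "(Pset N (fst \<omega>) (OS \<omega> J) \<inter> Hs) \<inter> Nminus N d (fst \<omega>) (OS \<omega> J) = {}"
    by (auto simp: Pset_def Nminus_def)
  moreover have "finite (Pset N (fst \<omega>) (OS \<omega> J) \<inter> Hs)" "finite (Nminus N d (fst \<omega>) (OS \<omega> J))"
    by (auto simp: Pset_def Nminus_def)
  ultimately show ?thesis by (simp add: Vc_def Lc_def card_Un_disjoint)
qed

definition F where "F \<omega> J = (if \<forall>s\<le>J. \<not> stp \<omega> s then 1 else 0 :: real)"

lemma step:
  assumes "k + J < N"
  shows "(\<Sum>\<omega>\<in>Omega. F \<omega> J * (M \<omega> (Suc J) - M \<omega> J)) \<le> 0"
proof -
  define p0 where "p0 \<omega> = real (Vc \<omega> J) / real (Lc \<omega> J) - real (Vc \<omega> J) / (1 + real (Lc \<omega> J))" for \<omega>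
  define p1 where "p1 \<omega> = - 1 / (1 + real (Lc \<omega> J))" for \<omega>
  define Psi where "Psi \<omega> = F \<omega> J * (p1 \<omega> - p0 \<omega>)" for \<omega>
  have pw: "F \<omega> J * (M \<omega> (Suc J) - M \<omega> J)
      = F \<omega> J * (if nxo \<omega> J \<in> G \<omega> J then p0 \<omega> else 0)
        + Psi \<omega> * (if nxo \<omega> J \<in> G \<omega> J \<and> fst \<omega> (nxo \<omega> J) then 1 else 0)"
    if "\<omega> \<in> Omega" for \<omega>
  proof -
    have e: "M \<omega> (Suc J) - M \<omega> J = (if nxo \<omega> J \<in> G \<omega> J then
       (if fst \<omega> (nxo \<omega> J) then p1 \<omega> else p0 \<omega>) else 0)"
      using dM[OF that assms] by (simp only: p0_def p1_def)
    show ?thesis unfolding e Psi_def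
      by (cases "nxo \<omega> J \<in> G \<omega> J"; cases "fst \<omega> (nxo \<omega> J)")
         (simp_all add: right_diff_distrib)
  qed
  have invP: "Psi (sw i j \<omega>) = Psi \<omega>"
    if "\<omega> \<in> Omega" "i \<in> G \<omega> J" "j \<in> G \<omega> J" for \<omega> i j
  proof -
    have "F (sw i j \<omega>) J = F \<omega> J"
      using inv(6)[OF that] unfolding F_def by simp
    moreover have "Vc (sw i j \<omega>) J = Vc \<omega> J" "Lc (sw i j \<omega>) J = Lc \<omega> J"
      using inv(3,4)[OF that] by auto
    ultimately show ?thesis by (simp add: Psi_def p0_def p1_def)
  qed
  have "(\<Sum>\<omega>\<in>Omega. F \<omega> J * (M \<omega> (Suc J) - M \<omega> J))
      = (\<Sum>\<omega>\<in>Omega. F \<omega> J * (if nxo \<omega> J \<in> G \<omega> J then p0 \<omega> else 0))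
        + (\<Sum>\<omega>\<in>Omega. Psi \<omega> * (if nxo \<omega> J \<in> G \<omega> J \<and> fst \<omega> (nxo \<omega> J) then 1 else 0))"
    unfolding sum.distrib[symmetric] by (rule sum.cong[OF refl]) (rule pw)
  also have "(\<Sum>\<omega>\<in>Omega. Psi \<omega> * (if nxo \<omega> J \<in> G \<omega> J \<and> fst \<omega> (nxo \<omega> J) then 1 else 0))
      = (\<Sum>\<omega>\<in>Omega. Psi \<omega> * (if nxo \<omega> J \<in> G \<omega> J then real (Vc \<omega> J) / real (card (G \<omega> J)) else 0))"
    by (rule swap_sum[where Psi=Psi and J=J], rule invP)
  also have "(\<Sum>\<omega>\<in>Omega. F \<omega> J * (if nxo \<omega> J \<in> G \<omega> J then p0 \<omega> else 0))
      + (\<Sum>\<omega>\<in>Omega. Psi \<omega> * (if nxo \<omega> J \<in> G \<omega> J then real (Vc \<omega> J) / real (card (G \<omega> J)) else 0))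
      = (\<Sum>\<omega>\<in>Omega. F \<omega> J * (if nxo \<omega> J \<in> G \<omega> J then
           p0 \<omega> + (p1 \<omega> - p0 \<omega>) * (real (Vc \<omega> J) / real (Vc \<omega> J + Lc \<omega> J)) else 0))"
    unfolding sum.distrib[symmetric] by (rule sum.cong[OF refl]) (simp add: Psi_def card_G distrib_left mult.assoc)
  also have "\<dots> \<le> 0"
  proof (rule sum_nonpos)
    fix \<omega> assume "\<omega> \<in> Omega"
    show "F \<omega> J * (if nxo \<omega> J \<in> G \<omega> J then
           p0 \<omega> + (p1 \<omega> - p0 \<omega>) * (real (Vc \<omega> J) / real (Vc \<omega> J + Lc \<omega> J)) else 0) \<le> 0"
    proof (cases "nxo \<omega> J \<in> G \<omega> J")
      case True
      then have "card (G \<omega> J) > 0" using finite_G card_gt_0_iff by blast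
      then have "0 < Vc \<omega> J + Lc \<omega> J" by (simp add: card_G)
      then have "p0 \<omega> + (p1 \<omega> - p0 \<omega>) * (real (Vc \<omega> J) / real (Vc \<omega> J + Lc \<omega> J)) \<le> 0"
        unfolding p0_def p1_def by (rule arith_step)
      moreover have "F \<omega> J \<ge> 0" by (simp add: F_def)
      ultimately show ?thesis using True by (simp add: mult_nonneg_nonpos)
    qed simp
  qed
  finally show ?thesis .
qed


primrec Z :: "((nat \<Rightarrow> bool) \<times> nat list) \<Rightarrow> nat \<Rightarrow> real" where
  "Z \<omega> 0 = M \<omega> 0"
| "Z \<omega> (Suc J) = (if \<exists>s\<le>J. stp \<omega> s then Z \<omega> J else M \<omega> (Suc J))"

lemma M_nonneg: "M \<omega> s \<ge> 0" by (simp add: M_def)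

lemma Z_nonneg: "Z \<omega> J \<ge> 0" by (induction J) (auto simp: M_nonneg)

lemma Z_M: "(\<forall>s<J. \<not> stp \<omega> s) \<Longrightarrow> Z \<omega> J = M \<omega> J"
  by (induction J) auto

lemma Z_stop: "stp \<omega> s \<Longrightarrow> (\<forall>s'<s. \<not> stp \<omega> s') \<Longrightarrow> s \<le> J \<Longrightarrow> Z \<omega> J = M \<omega> s"
proof (induction J)
  case 0 then show ?case by simp
next
  case (Suc J)
  show ?case
  proof (cases "s = Suc J")
    case True
    then have "\<not> (\<exists>s'\<le>J. stp \<omega> s')" using Suc.prems by auto
    then show ?thesis using True by auto
  next
    case False
    then have "s \<le> J" using Suc.prems by simp
    then show ?thesis using Suc by auto
  qed
qed

lemma Z_diff: "Z \<omega> (Suc J) - Z \<omega> J = F \<omega> J * (M \<omega> (Suc J) - M \<omega> J)"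
proof (cases "\<exists>s\<le>J. stp \<omega> s")
  case True then show ?thesis by (auto simp: F_def)
next
  case False
  then have "Z \<omega> J = M \<omega> J" by (intro Z_M) auto
  then show ?thesis using False by (auto simp: F_def)
qed

lemma sumZ: "J \<le> N - k \<Longrightarrow> (\<Sum>\<omega>\<in>Omega. Z \<omega> J) \<le> (\<Sum>\<omega>\<in>Omega. M \<omega> 0)"
proof (induction J)
  case 0 then show ?case by simp
next
  case (Suc J)
  then have kJ: "k + J < N" by simp
  have "(\<Sum>\<omega>\<in>Omega. Z \<omega> (Suc J)) = (\<Sum>\<omega>\<in>Omega. Z \<omega> J) + (\<Sum>\<omega>\<in>Omega. F \<omega> J * (M \<omega> (Suc J) - M \<omega> J))"
    unfolding sum.distrib[symmetric] by (rule sum.cong[OF refl]) (simp add: Z_diff[symmetric])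
  also have "\<dots> \<le> (\<Sum>\<omega>\<in>Omega. Z \<omega> J)" using step[OF kJ] by simp
  finally show ?case using Suc by simp
qed

lemma fdp_le:
  assumes om: "\<omega> \<in> Omega"
  shows "acs_fdp n m \<alpha> d (fst \<omega>) (snd \<omega>) rule
     \<le> \<alpha> * (real n - real k + 1) / real m * Z \<omega> (N - k)"
proof -
  let ?a = "fst \<omega>" and ?init = "snd \<omega>"
  have lk: "length ?init = k" using om by (simp add: Omega_iff)
  define Ls where "Ls = {l \<in> {k..N}. fdp_hat n m k d ?a (set (acs_order N d ?a ?init rule (l - k))) \<le> \<alpha>}"
  have cpos: "\<alpha> * (real n - real k + 1) / real m \<ge> 0" using apos kn m1 by simp
  have sel: "acs_select n m \<alpha> d ?a ?init rule = (if Ls = {} then {} else Pset N ?a (OS \<omega> (Min Ls - k)))"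
    unfolding acs_select_def Let_def lk Ls_def OS_def by simp
  show ?thesis
  proof (cases "Ls = {}")
    case True
    then have "acs_fdp n m \<alpha> d ?a ?init rule = 0" using sel by (simp add: acs_fdp_def Let_def)
    then show ?thesis using mult_nonneg_nonneg[OF cpos Z_nonneg[of \<omega> "N - k"]] by simp
  next
    case False
    have finL: "finite Ls" by (simp add: Ls_def)
    define T where "T = Min Ls"
    have TL: "T \<in> Ls" using Min_in[OF finL False] by (simp add: T_def)
    define s where "s = T - k"
    have Ts: "T = k + s" "k + s \<le> N" using TL by (auto simp: s_def Ls_def)
    have stps: "stp \<omega> s" using TL Ts by (simp add: Ls_def stp_def OS_def)
    have before: "\<forall>s'<s. \<not> stp \<omega> s'"
    proof (intro allI impI notI)
      fix s' assume "s' < s" "stp \<omega> s'"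
      then have "k + s' \<in> Ls" using Ts by (simp add: Ls_def stp_def OS_def)
      then have "T \<le> k + s'" using Min_le[OF finL] by (simp add: T_def)
      then show False using \<open>s' < s\<close> Ts by simp
    qed
    have Zs: "Z \<omega> (N - k) = M \<omega> s" by (rule Z_stop[OF stps before]) (use Ts in simp)
    have S: "acs_select n m \<alpha> d ?a ?init rule = Pset N ?a (OS \<omega> s)"
      using sel False by (simp add: T_def[symmetric] s_def)
    have SH: "Pset N ?a (OS \<omega> s) \<inter> {i. i < N \<and> ?a i \<and> Yof d i \<in> Cof d i} = Pset N ?a (OS \<omega> s) \<inter> Hs"
      by (auto simp: Pset_def Hs_def)
    have fdp: "acs_fdp n m \<alpha> d ?a ?init rule = real (Vc \<omega> s) / real (max (Pc \<omega> s) 1)"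
      unfolding acs_fdp_def Let_def S SH by (simp add: Vc_def Pc_def)
    have hyp: "real m / (real n - real k + 1) * (1 + real (Lc \<omega> s)) / real (max (Pc \<omega> s) 1) \<le> \<alpha>"
      using stps by (simp add: stp_def fdp_hat_def Lc_def Pc_def)
    have "real (Vc \<omega> s) / real (max (Pc \<omega> s) 1)
        \<le> \<alpha> * (real n - real k + 1) / real m * (real (Vc \<omega> s) / (1 + real (Lc \<omega> s)))"
      by (rule fdp_arith[OF _ _ _ _ _ hyp]) (use kn m1 in auto)
    then show ?thesis unfolding fdp Zs M_def .
  qed
qed


definition Uc where "Uc \<omega> = {x. x < N \<and> \<not> fst \<omega> x \<and> x \<notin> set (snd \<omega>)}"
definition Tt where "Tt \<omega> j i = (if fst \<omega> j \<and> i \<in> insert j (Uc \<omega>) \<and> i \<in> Hs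
   then 1 / real (card (Hs \<inter> insert j (Uc \<omega>))) else 0)"

lemma finite_Uc: "finite (Uc \<omega>)" by (simp add: Uc_def)

lemma tests_eq: "\<omega> \<in> Omega \<Longrightarrow> {x. x < N \<and> fst \<omega> x} = {x. fst \<omega> x}"
  by (auto simp: Omega_iff)

lemma card_Uc:
  assumes om: "\<omega> \<in> Omega"
  shows "card (Uc \<omega>) = n - k"
proof -
  let ?a = "fst \<omega>" and ?init = "snd \<omega>"
  have t: "card {x. x < N \<and> ?a x} = m" using om tests_eq[OF om] by (simp add: Omega_iff)
  have lab: "{x. x < N \<and> \<not> ?a x} = {..<N} - {x. x < N \<and> ?a x}" by auto
  have cl: "card {x. x < N \<and> \<not> ?a x} = n"
    unfolding lab by (subst card_Diff_subset) (auto simp: t)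
  have "Uc \<omega> = {x. x < N \<and> \<not> ?a x} - set ?init" by (auto simp: Uc_def)
  moreover have "set ?init \<subseteq> {x. x < N \<and> \<not> ?a x}" using om by (auto simp: Omega_iff)
  moreover have "card (set ?init) = k" using om by (simp add: Omega_iff distinct_card)
  ultimately show ?thesis using cl by (simp add: card_Diff_subset finite_subset[of _ "{..<N}"])
qed

lemma M0_T:
  assumes om: "\<omega> \<in> Omega"
  shows "M \<omega> 0 = (\<Sum>j<N. Tt \<omega> j j)"
proof -
  let ?a = "fst \<omega>" and ?init = "snd \<omega>"
  let ?L = "card (Hs \<inter> Uc \<omega>)"
  have initlab: "\<And>x. x \<in> set ?init \<Longrightarrow> \<not> ?a x" using om by (auto simp: Omega_iff)
  have V: "Pset N ?a (OS \<omega> 0) \<inter> Hs = {..<N} \<inter> {j. ?a j \<and> j \<in> Hs}"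
    using initlab by (auto simp: Pset_def OS_def)
  have L: "Nminus N d ?a (OS \<omega> 0) = Hs \<inter> Uc \<omega>"
    by (auto simp: Nminus_def OS_def Uc_def Hs_def)
  have T: "Tt \<omega> j j = (if j \<in> {j. ?a j \<and> j \<in> Hs} then 1 / (1 + real ?L) else 0)" for j
  proof (cases "?a j \<and> j \<in> Hs")
    case True
    then have "j \<notin> Uc \<omega>" by (simp add: Uc_def)
    then have "Hs \<inter> insert j (Uc \<omega>) = insert j (Hs \<inter> Uc \<omega>)" "j \<notin> Hs \<inter> Uc \<omega>" using True by auto
    moreover have "finite (Hs \<inter> Uc \<omega>)" using finite_Uc by simp
    ultimately show ?thesis using True by (simp add: Tt_def)
  qed (auto simp: Tt_def)
  have "(\<Sum>j<N. Tt \<omega> j j) = real (card ({..<N} \<inter> {j. ?a j \<and> j \<in> Hs})) * (1 / (1 + real ?L))"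
    unfolding T by (rule sum_if_const) simp
  then show ?thesis by (simp add: M_def Vc_def Lc_def V L)
qed

lemma rowT:
  assumes om: "\<omega> \<in> Omega"
  shows "(\<Sum>i<N. Tt \<omega> j i) \<le> (if fst \<omega> j then 1 else 0)"
proof -
  let ?S = "{i. fst \<omega> j \<and> i \<in> insert j (Uc \<omega>) \<and> i \<in> Hs}"
  have "(\<Sum>i<N. Tt \<omega> j i) = (\<Sum>i<N. if i \<in> ?S then 1 / real (card (Hs \<inter> insert j (Uc \<omega>))) else 0)"
    by (simp add: Tt_def)
  also have "\<dots> = real (card ({..<N} \<inter> ?S)) * (1 / real (card (Hs \<inter> insert j (Uc \<omega>))))"
    by (rule sum_if_const) simp
  also have "\<dots> \<le> (if fst \<omega> j then 1 else 0)"
  proof (cases "fst \<omega> j")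
    case True
    then have "{..<N} \<inter> ?S = Hs \<inter> insert j (Uc \<omega>)" using Hs_sub by auto
    then show ?thesis using True by simp
  qed simp
  finally show ?thesis .
qed

lemma sumT_le:
  assumes om: "\<omega> \<in> Omega"
  shows "(\<Sum>j<N. \<Sum>i<N. Tt \<omega> j i) \<le> real m"
proof -
  have "(\<Sum>j<N. \<Sum>i<N. Tt \<omega> j i) \<le> (\<Sum>j<N. if j \<in> {j. fst \<omega> j} then 1 else 0)"
    by (rule sum_mono) (use rowT[OF om] in simp)
  also have "\<dots> = real (card ({..<N} \<inter> {j. fst \<omega> j}))"
    by (subst sum_if_const) auto
  also have "{..<N} \<inter> {j. fst \<omega> j} = {j. fst \<omega> j}" using om by (auto simp: Omega_iff)
  finally show ?thesis using om by (simp add: Omega_iff)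
qed

lemma Tswap:
  assumes om: "\<omega> \<in> Omega" and ij: "i < N" "j < N" "i \<noteq> j"
  shows "Tt \<omega> j i = Tt (sw i j \<omega>) i i * (if j \<in> Uc (sw i j \<omega>) then 1 else 0)"
proof (cases "i \<notin> set (snd \<omega>) \<and> j \<notin> set (snd \<omega>)")
  case True
  let ?a = "fst \<omega>"
  have sw: "sw i j \<omega> = (swp i j ?a, snd \<omega>)" using True by (simp add: sw_def)
  show ?thesis
  proof (cases "?a j \<and> \<not> ?a i")
    case c: True
    have U2: "insert i (Uc (sw i j \<omega>)) = insert j (Uc \<omega>)"
      using True c ij by (auto simp: Uc_def sw swp_def)
    have iU: "i \<in> insert j (Uc \<omega>)" using True c ij by (simp add: Uc_def)
    have jU: "j \<in> Uc (sw i j \<omega>)" using True c ij by (simp add: Uc_def sw swp_def)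
    have ai: "fst (sw i j \<omega>) i" using c by (simp add: sw swp_def)
    show ?thesis unfolding Tt_def U2 using iU jU ai c by simp
  next
    case c: False
    have l: "Tt \<omega> j i = 0"
      using True c ij by (auto simp: Tt_def Uc_def)
    have r: "fst (sw i j \<omega>) i \<longrightarrow> j \<notin> Uc (sw i j \<omega>)"
      using True c ij by (auto simp: Uc_def sw swp_def)
    show ?thesis using l r by (auto simp: Tt_def)
  qed
next
  case False
  then have sw: "sw i j \<omega> = \<omega>" by (auto simp: sw_def)
  have initlab: "\<And>x. x \<in> set (snd \<omega>) \<Longrightarrow> \<not> fst \<omega> x" using om by (auto simp: Omega_iff)
  show ?thesis
  proof (cases "i \<in> set (snd \<omega>)")
    case True
    then have "Tt \<omega> j i = 0" "Tt \<omega> i i = 0" using initlab ij by (auto simp: Tt_def Uc_def)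
    then show ?thesis using sw by simp
  next
    case c: False
    then have "j \<in> set (snd \<omega>)" using False by simp
    then have "Tt \<omega> j i = 0" "j \<notin> Uc \<omega>" using initlab by (auto simp: Tt_def Uc_def)
    then show ?thesis using sw by simp
  qed
qed

lemma rowU:
  assumes om: "\<omega> \<in> Omega"
  shows "(\<Sum>j<N. if i \<noteq> j then Tt \<omega> i i * (if j \<in> Uc \<omega> then 1 else 0) else 0) = real (n - k) * Tt \<omega> i i"
proof (cases "fst \<omega> i")
  case True
  then have iU: "i \<notin> Uc \<omega>" by (simp add: Uc_def)
  have "(\<Sum>j<N. if i \<noteq> j then Tt \<omega> i i * (if j \<in> Uc \<omega> then 1 else 0) else 0)
      = (\<Sum>j<N. if j \<in> Uc \<omega> then Tt \<omega> i i else 0)"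
    using iU by (intro sum.cong) auto
  also have "\<dots> = real (card ({..<N} \<inter> Uc \<omega>)) * Tt \<omega> i i"
    by (rule sum_if_const) simp
  also have "{..<N} \<inter> Uc \<omega> = Uc \<omega>" by (auto simp: Uc_def)
  finally show ?thesis using card_Uc[OF om] by simp
next
  case False
  then have z: "Tt \<omega> i i = 0" by (simp add: Tt_def)
  show ?thesis unfolding z by (simp only: mult_zero_left mult_zero_right if_cancel sum.neutral_const)
qed

lemma init_bound:
  "real (n - k + 1) * (\<Sum>\<omega>\<in>Omega. M \<omega> 0) \<le> real (card Omega) * real m"
proof -
  have split: "(\<Sum>i<N. Tt \<omega> j i) = Tt \<omega> j j + (\<Sum>i<N. if i \<noteq> j then Tt \<omega> j i else 0)"
    if "j < N" for \<omega> j
  proof -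
    have "(\<Sum>i<N. Tt \<omega> j i) = (\<Sum>i<N. (if i = j then Tt \<omega> j i else 0) + (if i \<noteq> j then Tt \<omega> j i else 0))"
      by (rule sum.cong) auto
    also have "\<dots> = Tt \<omega> j j + (\<Sum>i<N. if i \<noteq> j then Tt \<omega> j i else 0)"
      using that by (simp add: sum.distrib)
    finally show ?thesis .
  qed
  have A: "(\<Sum>\<omega>\<in>Omega. \<Sum>j<N. \<Sum>i<N. Tt \<omega> j i)
     = (\<Sum>\<omega>\<in>Omega. M \<omega> 0) + (\<Sum>\<omega>\<in>Omega. \<Sum>j<N. \<Sum>i<N. if i \<noteq> j then Tt \<omega> j i else 0)"
  proof -
    have "(\<Sum>j<N. \<Sum>i<N. Tt \<omega> j i) = M \<omega> 0 + (\<Sum>j<N. \<Sum>i<N. if i \<noteq> j then Tt \<omega> j i else 0)"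
      if "\<omega> \<in> Omega" for \<omega>
      using M0_T[OF that] split by (simp add: sum.distrib)
    then show ?thesis by (simp add: sum.distrib)
  qed
  have B: "(\<Sum>\<omega>\<in>Omega. \<Sum>j<N. \<Sum>i<N. if i \<noteq> j then Tt \<omega> j i else 0)
     = real (n - k) * (\<Sum>\<omega>\<in>Omega. M \<omega> 0)"
  proof -
    have "(\<Sum>\<omega>\<in>Omega. \<Sum>j<N. \<Sum>i<N. if i \<noteq> j then Tt \<omega> j i else 0)
        = (\<Sum>j<N. \<Sum>i<N. \<Sum>\<omega>\<in>Omega. if i \<noteq> j then Tt \<omega> j i else 0)"
      by (rule sum3_swap)
    also have "\<dots> = (\<Sum>j<N. \<Sum>i<N. \<Sum>\<omega>\<in>Omega. if i \<noteq> j then Tt \<omega> i i * (if j \<in> Uc \<omega> then 1 else 0) else 0)"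
    proof (rule sum.cong[OF refl], rule sum.cong[OF refl])
      fix j i assume j: "j \<in> {..<N}" and i: "i \<in> {..<N}"
      show "(\<Sum>\<omega>\<in>Omega. if i \<noteq> j then Tt \<omega> j i else 0)
          = (\<Sum>\<omega>\<in>Omega. if i \<noteq> j then Tt \<omega> i i * (if j \<in> Uc \<omega> then 1 else 0) else 0)"
      proof (cases "i = j")
        case False
        have "(\<Sum>\<omega>\<in>Omega. Tt \<omega> j i)
            = (\<Sum>\<omega>\<in>Omega. (\<lambda>\<omega>. Tt \<omega> i i * (if j \<in> Uc \<omega> then 1 else 0)) (sw i j \<omega>))"
          using Tswap False i j by (intro sum.cong) auto
        also have "\<dots> = (\<Sum>\<omega>\<in>Omega. Tt \<omega> i i * (if j \<in> Uc \<omega> then 1 else 0))"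
          using sum_sw[of i j "\<lambda>\<omega>. Tt \<omega> i i * (if j \<in> Uc \<omega> then 1 else 0)"] i j by simp
        finally show ?thesis using False by simp
      qed simp
    qed
    also have "\<dots> = (\<Sum>\<omega>\<in>Omega. \<Sum>j<N. \<Sum>i<N. if i \<noteq> j then Tt \<omega> i i * (if j \<in> Uc \<omega> then 1 else 0) else 0)"
      by (rule sum3_swap[symmetric])
    also have "\<dots> = (\<Sum>\<omega>\<in>Omega. \<Sum>i<N. \<Sum>j<N. if i \<noteq> j then Tt \<omega> i i * (if j \<in> Uc \<omega> then 1 else 0) else 0)"
      by (rule sum.cong[OF refl]) (rule sum.swap)
    also have "\<dots> = (\<Sum>\<omega>\<in>Omega. \<Sum>i<N. real (n - k) * Tt \<omega> i i)"
      by (intro sum.cong refl rowU) simp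
    also have "\<dots> = real (n - k) * (\<Sum>\<omega>\<in>Omega. M \<omega> 0)"
      by (simp add: sum_distrib_left[symmetric] M0_T)
    finally show ?thesis .
  qed
  have C: "(\<Sum>\<omega>\<in>Omega. \<Sum>j<N. \<Sum>i<N. Tt \<omega> j i) \<le> real (card Omega) * real m"
    using sum_mono[of Omega "\<lambda>\<omega>. \<Sum>j<N. \<Sum>i<N. Tt \<omega> j i" "\<lambda>_. real m"] sumT_le by simp
  have "real (n - k + 1) * (\<Sum>\<omega>\<in>Omega. M \<omega> 0) = (\<Sum>\<omega>\<in>Omega. \<Sum>j<N. \<Sum>i<N. Tt \<omega> j i)"
    unfolding A B by (simp add: algebra_simps)
  then show ?thesis using C by simp
qed

lemma core_sum:
  "(\<Sum>\<omega>\<in>Omega. acs_fdp n m \<alpha> d (fst \<omega>) (snd \<omega>) rule) \<le> \<alpha> * real (card Omega)"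
proof -
  define c where "c = \<alpha> * (real n - real k + 1) / real m"
  have c0: "c \<ge> 0" using apos kn m1 by (simp add: c_def)
  have D: "real n - real k + 1 = real (n - k + 1)" using kn by simp
  have "(\<Sum>\<omega>\<in>Omega. acs_fdp n m \<alpha> d (fst \<omega>) (snd \<omega>) rule) \<le> (\<Sum>\<omega>\<in>Omega. c * Z \<omega> (N - k))"
    by (rule sum_mono) (unfold c_def, rule fdp_le)
  also have "\<dots> = c * (\<Sum>\<omega>\<in>Omega. Z \<omega> (N - k))" by (simp add: sum_distrib_left)
  also have "\<dots> \<le> c * (\<Sum>\<omega>\<in>Omega. M \<omega> 0)" by (rule mult_left_mono[OF sumZ c0]) simp
  also have "\<dots> = \<alpha> / real m * (real (n - k + 1) * (\<Sum>\<omega>\<in>Omega. M \<omega> 0))"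
    by (simp add: c_def D)
  also have "\<dots> \<le> \<alpha> / real m * (real (card Omega) * real m)"
    by (rule mult_left_mono[OF init_bound]) (use apos in simp)
  also have "\<dots> = \<alpha> * real (card Omega)" using m1 by simp
  finally show ?thesis .
qed


lemma card_labeled:
  assumes "(\<forall>i. a i \<longrightarrow> i < N)" "card {i. a i} = m"
  shows "card {i. i < N \<and> \<not> a i} = n"
proof -
  have "{i. i < N \<and> \<not> a i} = {..<N} - {i. a i}" by auto
  moreover have "{i. a i} \<subseteq> {..<N}" using assms(1) by auto
  ultimately show ?thesis using assms(2) by (simp add: card_Diff_subset finite_subset)
qed

lemma pmf_bound:
  "(\<integral>x. acs_fdp n m \<alpha> d (fst x) (snd x) rule \<partial>measure_pmf (label_pmf n m k)) \<le> \<alpha>"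
proof -
  define A where "A = {a. (\<forall>i. a i \<longrightarrow> i < N) \<and> card {i. a i} = m}"
  define I where "I = (\<lambda>a. {l. distinct l \<and> length l = k \<and> set l \<subseteq> {i. i < N \<and> \<not> a i}})"
  define c where "c = \<Prod>{n - k + 1..n}"
  define h where "h = (\<lambda>x. acs_fdp n m \<alpha> d (fst x) (snd x) rule)"
  have OmA: "Omega = Sigma A I" by (simp add: Omega_def A_def I_def)
  have finA: "finite A"
  proof -
    have "A \<subseteq> (\<lambda>S x. x \<in> S) ` Pow {..<N}"
    proof
      fix a assume "a \<in> A"
      then have "a = (\<lambda>x. x \<in> {i. a i})" "{i. a i} \<in> Pow {..<N}" by (auto simp: A_def)
      then show "a \<in> (\<lambda>S x. x \<in> S) ` Pow {..<N}" by blast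
    qed
    then show ?thesis by (rule finite_subset) simp
  qed
  have neA: "A \<noteq> {}"
  proof -
    have "(\<lambda>i. i < m) \<in> A" by (auto simp: A_def)
    then show ?thesis by blast
  qed
  have finI: "finite (I a)" for a
  proof -
    have "finite {l::nat list. set l \<subseteq> {..<N} \<and> length l = k}"
      by (rule finite_lists_length_eq) simp
    then show ?thesis by (rule rev_finite_subset) (auto simp: I_def)
  qed
  have cardI: "card (I a) = c" if "a \<in> A" for a
  proof -
    have cl: "card {i. i < N \<and> \<not> a i} = n" using that by (intro card_labeled) (auto simp: A_def)
    have "I a = {xs. length xs = k \<and> distinct xs \<and> set xs \<subseteq> {i. i < N \<and> \<not> a i}}"
      by (auto simp: I_def)
    then show ?thesis using card_lists_distinct_length_eq[of "{i. i < N \<and> \<not> a i}" k] cl kn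
      by (simp add: c_def)
  qed
  have cpos: "c > 0" unfolding c_def by (rule prod_pos) auto
  have neI: "I a \<noteq> {}" if "a \<in> A" for a
    using cardI[OF that] cpos by auto
  have finS: "finite (set_pmf (pmf_of_set (I a) \<bind> (\<lambda>init. return_pmf (a, init))))" if "a \<in> A" for a
    using finI neI[OF that] by simp
  have inner: "measure_pmf.expectation (pmf_of_set (I a) \<bind> (\<lambda>init. return_pmf (a, init))) h
      = (\<Sum>init\<in>I a. h (a, init)) / real c" if "a \<in> A" for a
  proof -
    have "measure_pmf.expectation (pmf_of_set (I a) \<bind> (\<lambda>init. return_pmf (a, init))) h
        = (\<Sum>init\<in>I a. measure_pmf.expectation (return_pmf (a, init)) h /\<^sub>R real (card (I a)))"
      by (rule pmf_expectation_bind_pmf_of_set) (use finI neI[OF that] in auto)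
    also have "\<dots> = (\<Sum>init\<in>I a. h (a, init)) / real c"
      by (simp add: cardI[OF that] sum_divide_distrib divide_inverse_commute sum_distrib_left)
    finally show ?thesis .
  qed
  have "(\<integral>x. acs_fdp n m \<alpha> d (fst x) (snd x) rule \<partial>measure_pmf (label_pmf n m k))
      = measure_pmf.expectation (pmf_of_set A \<bind> (\<lambda>a. pmf_of_set (I a) \<bind> (\<lambda>init. return_pmf (a, init)))) h"
    by (simp add: label_pmf_def A_def I_def h_def)
  also have "\<dots> = (\<Sum>a\<in>A. measure_pmf.expectation (pmf_of_set (I a) \<bind> (\<lambda>init. return_pmf (a, init))) h /\<^sub>R real (card A))"
    by (rule pmf_expectation_bind_pmf_of_set[OF neA finA finS])
  also have "\<dots> = (\<Sum>a\<in>A. (\<Sum>init\<in>I a. h (a, init))) / (real c * real (card A))"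
    by (simp add: inner sum_divide_distrib divide_inverse_commute sum_distrib_left mult.assoc mult.left_commute)
  also have "(\<Sum>a\<in>A. (\<Sum>init\<in>I a. h (a, init))) = (\<Sum>\<omega>\<in>Omega. h \<omega>)"
    unfolding OmA using sum.Sigma[OF finA, of I "\<lambda>a init. h (a, init)"] finI by simp
  also have "real (card Omega) = real c * real (card A)"
    unfolding OmA using finA finI cardI by (simp add: card_SigmaI)
  then have "(\<Sum>\<omega>\<in>Omega. h \<omega>) \<le> \<alpha> * (real c * real (card A))"
    using core_sum by (simp add: h_def)
  then have "(\<Sum>\<omega>\<in>Omega. h \<omega>) / (real c * real (card A)) \<le> \<alpha>"
    using cpos finA neA by (simp add: pos_divide_le_eq card_gt_0_iff)
  finally show ?thesis .
qed

end

theorem theorem1: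
  fixes n m k :: nat and \<alpha> :: real
    and MX :: "'x measure" and MC :: "real set measure"
    and Q :: "'x acs_data measure"
    and rule :: "nat \<Rightarrow> 'x acs_info \<Rightarrow> nat"
  assumes "1 \<le> n" and "1 \<le> m" and "k \<le> n" and "0 < \<alpha>" and "\<alpha> < 1"
    and null_meas: "{p \<in> space (borel \<Otimes>\<^sub>M MC). fst p \<in> snd p} \<in> sets (borel \<Otimes>\<^sub>M MC)"
    and Q_prob: "prob_space Q"
    and Q_sets: "sets Q = sets (\<Pi>\<^sub>M i\<in>{..<n+m}. MX \<Otimes>\<^sub>M borel \<Otimes>\<^sub>M MC)"
    and exch: "\<And>\<sigma>. \<sigma> permutes {..<n+m} \<Longrightarrow> distr Q Q (\<lambda>d. restrict (d \<circ> \<sigma>) {..<n+m}) = Q"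
    and rule_meas: "\<And>l. rule l \<in> acs_infoM MX (n+m) \<rightarrow>\<^sub>M count_space UNIV"
    and rule_valid: "\<And>l I. l < n+m \<Longrightarrow> distinct (fst I) \<Longrightarrow> length (fst I) = l
                        \<Longrightarrow> set (fst I) \<subseteq> {..<n+m} \<Longrightarrow> rule l I \<in> {..<n+m} - set (fst I)"
  shows "(\<integral>\<omega>. acs_fdp n m \<alpha> (fst \<omega>) (fst (snd \<omega>)) (snd (snd \<omega>)) rule
             \<partial>(Q \<Otimes>\<^sub>M measure_pmf (label_pmf n m k))) \<le> \<alpha>"
proof -
  let ?L = "measure_pmf (label_pmf n m k)"
  let ?f = "\<lambda>\<omega>. acs_fdp n m \<alpha> (fst \<omega>) (fst (snd \<omega>)) (snd (snd \<omega>)) rule"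
  show ?thesis
  proof (cases "integrable (Q \<Otimes>\<^sub>M ?L) ?f")
    case False
    then show ?thesis using assms(4) by (simp add: not_integrable_integral_eq)
  next
    case True
    interpret pq: pair_sigma_finite Q ?L
      by (simp add: pair_sigma_finite_def prob_space_imp_sigma_finite[OF Q_prob]
          prob_space_imp_sigma_finite[OF measure_pmf.prob_space_axioms])
    have eq: "(\<integral>x. (\<integral>y. ?f (x, y) \<partial>?L) \<partial>Q) = integral\<^sup>L (Q \<Otimes>\<^sub>M ?L) ?f"
      by (rule pq.integral_fst'[OF True])
    have int: "integrable Q (\<lambda>x. \<integral>y. ?f (x, y) \<partial>?L)"
      by (rule pq.integrable_fst'[OF True])
    have bd: "(\<integral>y. acs_fdp n m \<alpha> x (fst y) (snd y) rule \<partial>?L) \<le> \<alpha>" for x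
    proof -
      interpret acs_core n m k \<alpha> x rule
        using assms(1-4) rule_valid by (unfold_locales) auto
      show ?thesis by (rule pmf_bound)
    qed
    have "(\<integral>x. (\<integral>y. ?f (x, y) \<partial>?L) \<partial>Q) \<le> \<alpha>"
      by (rule prob_space.integral_le_const[OF Q_prob int]) (intro AE_I2, simp add: bd)
    then show ?thesis using eq by simp
  qed
qed

end
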